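(* Let $\mathcal{T}$ be a locally compact, $\sigma$-compact Hausdorff space, $\mu$ a finite positive Radon measure on $\mathcal{T}$ with $\mu(\mathcal{T})>0$, $1\le p<\infty$ with conjugate $q$, and $\varepsilon>1$. Let $S_\varepsilon^p=\{f\in L^q_\mu(\mathcal{T})\text{ real}:\|f\|_q\le\varepsilon,\ \int f\,d\mu=\mu(\mathcal{T})^{1/p}\}$ and $L^p(\mathcal{T})_\varepsilon^+=\{g\in L^p_\mu(\mathcal{T})\text{ real}:\int gf\,d\mu\ge0\ \forall f\in S_\varepsilon^p\}$. Then $L^p(\mathcal{T})_+\subseteq L^p(\mathcal{T})_\varepsilon^+$ if and only if $S_\varepsilon^p\subseteq L^q(\mathcal{T})_+$, where $L^s(\mathcal{T})_+$ denotes the $\mu$-a.e. nonnegative functions in $L^s_\mu(\mathcal{T})$. *)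

theory Defs
  imports "HOL-Analysis.Analysis" "HOL-Probability.Essential_Supremum"
begin

text \<open>Topological hypotheses on the ambient type (the space T is UNIV).\<close>
definition sigma_compact_UNIV :: "'a::topological_space itself \<Rightarrow> bool" where
  "sigma_compact_UNIV _ \<longleftrightarrow>
     (\<exists>K :: nat \<Rightarrow> 'a set. (\<forall>n. compact (K n)) \<and> (\<Union>n. K n) = UNIV)"

text \<open>Radon measure (Folland): Borel measure, finite on compacts, outer regular on
  Borel sets, inner regular (by compacts) on open sets.\<close>
definition radon_measure :: "'a::topological_space measure \<Rightarrow> bool" where
  "radon_measure M \<longleftrightarrow>
     sets M = sets borel \<and>
     (\<forall>K. compact K \<longrightarrow> emeasure M K < \<infinity>) \<and>
     (\<forall>A\<in>sets borel. emeasure M A = (INF U\<in>{U. open U \<and> A \<subseteq> U}. emeasure M U)) \<and>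
     (\<forall>U. open U \<longrightarrow> emeasure M U = (SUP K\<in>{K. compact K \<and> K \<subseteq> U}. emeasure M K))"

definition conj_exp :: "real \<Rightarrow> ereal" where
  "conj_exp p = (if p = 1 then \<infinity> else ereal (p / (p - 1)))"

definition Lnorm :: "'a measure \<Rightarrow> ereal \<Rightarrow> ('a \<Rightarrow> real) \<Rightarrow> ereal" where
  "Lnorm M r f =
     (if r = \<infinity> then esssup M (\<lambda>x. ereal \<bar>f x\<bar>)
      else ereal ((\<integral>x. \<bar>f x\<bar> powr real_of_ereal r \<partial>M) powr (1 / real_of_ereal r)))"

definition memL :: "'a measure \<Rightarrow> ereal \<Rightarrow> ('a \<Rightarrow> real) \<Rightarrow> bool" where
  "memL M r f \<longleftrightarrow> f \<in> borel_measurable M \<and>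
     (if r = \<infinity> then esssup M (\<lambda>x. ereal \<bar>f x\<bar>) < \<infinity>
      else integrable M (\<lambda>x. \<bar>f x\<bar> powr real_of_ereal r))"

definition S_eps :: "'a measure \<Rightarrow> real \<Rightarrow> real \<Rightarrow> ('a \<Rightarrow> real) set" where
  "S_eps M p \<epsilon> = {f. memL M (conj_exp p) f \<and> Lnorm M (conj_exp p) f \<le> ereal \<epsilon> \<and>
       (\<integral>x. f x \<partial>M) = measure M (space M) powr (1 / p)}"

definition Lp_eps_pos :: "'a measure \<Rightarrow> real \<Rightarrow> real \<Rightarrow> ('a \<Rightarrow> real) set" where
  "Lp_eps_pos M p \<epsilon> = {g. memL M (ereal p) g \<and>
       (\<forall>f\<in>S_eps M p \<epsilon>. (\<integral>x. g x * f x \<partial>M) \<ge> 0)}"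

definition L_pos :: "'a measure \<Rightarrow> ereal \<Rightarrow> ('a \<Rightarrow> real) set" where
  "L_pos M r = {g. memL M r g \<and> (AE x in M. g x \<ge> 0)}"

end

theory Submission
  imports Defs
begin

theorem lemma5p3:
  fixes M :: "('a::t2_space) measure" and p \<epsilon> :: real
  assumes "locally_compact_space (euclidean :: 'a topology)"
    and "sigma_compact_UNIV TYPE('a)"
    and "radon_measure M"
    and "finite_measure M"
    and "emeasure M (space M) > 0"
    and "1 \<le> p"
    and "\<epsilon> > 1"
  shows "L_pos M (ereal p) \<subseteq> Lp_eps_pos M p \<epsilon> \<longleftrightarrow> S_eps M p \<epsilon> \<subseteq> L_pos M (conj_exp p)"
proof
  assume H: "L_pos M (ereal p) \<subseteq> Lp_eps_pos M p \<epsilon>"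
  show "S_eps M p \<epsilon> \<subseteq> L_pos M (conj_exp p)"
  proof
    fix f assume fS: "f \<in> S_eps M p \<epsilon>"
    then have mf: "memL M (conj_exp p) f" by (simp add: S_eps_def)
    then have fm: "f \<in> borel_measurable M" by (simp add: memL_def)
    have "AE x in M. f x \<ge> 0"
    proof (rule ccontr)
      assume nAE: "\<not> (AE x in M. f x \<ge> 0)"
      define B where "B n = {x\<in>space M. - real n \<le> f x \<and> f x < 0}" for n :: nat
      have Bm: "B n \<in> sets M" for n unfolding B_def using fm by measurable
      have "\<exists>n. emeasure M (B n) \<noteq> 0"
      proof (rule ccontr)
        assume "\<not> (\<exists>n. emeasure M (B n) \<noteq> 0)"
        then have "B n \<in> null_sets M" for n using Bm by (simp add: null_sets_def)
        then have "(\<Union>n. B n) \<in> null_sets M" by (rule null_sets_UN)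
        moreover have "{x\<in>space M. \<not> f x \<ge> 0} \<subseteq> (\<Union>n. B n)"
        proof
          fix x assume "x \<in> {x\<in>space M. \<not> f x \<ge> 0}"
          moreover obtain n :: nat where "- f x \<le> real n" using real_arch_simple by blast
          ultimately have "x \<in> B n" unfolding B_def by auto
          then show "x \<in> (\<Union>n. B n)" by blast
        qed
        ultimately have "AE x in M. f x \<ge> 0"
          by (rule AE_I')
        with nAE show False by simp
      qed
      then obtain n where Bn: "emeasure M (B n) \<noteq> 0" by blast
      interpret finite_measure M by (rule assms(4))
      define g :: "'a \<Rightarrow> real" where "g = indicator (B n)"
      have gm: "g \<in> borel_measurable M" unfolding g_def using Bm by simp
      have pw: "(\<lambda>x. \<bar>g x\<bar> powr p) = g" using assms(6)
        by (auto simp: g_def indicator_def fun_eq_iff)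
      have "integrable M g" unfolding g_def
        by (rule integrable_real_indicator[OF Bm]) (simp add: less_top[symmetric])
      then have "memL M (ereal p) g" using gm pw by (simp add: memL_def)
      moreover have "AE x in M. g x \<ge> 0" by (simp add: g_def)
      ultimately have "g \<in> L_pos M (ereal p)" by (simp add: L_pos_def)
      with H have "(\<integral>x. g x * f x \<partial>M) \<ge> 0" using fS by (auto simp: Lp_eps_pos_def)
      moreover have "(\<integral>x. g x * f x \<partial>M) < (\<integral>x. 0 \<partial>M)"
      proof (rule integral_less_AE[OF _ _ Bn Bm])
        show "integrable M (\<lambda>x. g x * f x)"
        proof (rule integrable_const_bound[where B="real n"])
          show "AE x in M. norm (g x * f x) \<le> real n"
            by (auto simp: g_def B_def indicator_def)
          show "(\<lambda>x. g x * f x) \<in> borel_measurable M" using gm fm by simp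
        qed
        show "integrable M (\<lambda>x. 0::real)" by simp
        show "AE x\<in>B n in M. g x * f x \<noteq> 0"
          by (auto simp: g_def B_def)
        show "AE x in M. g x * f x \<le> 0"
          by (auto simp: g_def B_def indicator_def)
      qed
      ultimately show False by simp
    qed
    then show "f \<in> L_pos M (conj_exp p)" using mf by (simp add: L_pos_def)
  qed
next
  assume H: "S_eps M p \<epsilon> \<subseteq> L_pos M (conj_exp p)"
  show "L_pos M (ereal p) \<subseteq> Lp_eps_pos M p \<epsilon>"
  proof
    fix g assume g: "g \<in> L_pos M (ereal p)"
    have "(\<integral>x. g x * f x \<partial>M) \<ge> 0" if "f \<in> S_eps M p \<epsilon>" for f
    proof -
      have "AE x in M. f x \<ge> 0" using H that by (auto simp: L_pos_def)
      moreover have "AE x in M. g x \<ge> 0" using g by (auto simp: L_pos_def)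
      ultimately have "AE x in M. 0 \<le> g x * f x" by eventually_elim simp
      then show ?thesis by (rule integral_nonneg_AE)
    qed
    then show "g \<in> Lp_eps_pos M p \<epsilon>" using g by (simp add: Lp_eps_pos_def L_pos_def)
  qed
qed

end
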